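(* If $G$ is a connected graph, then $\mathrm{gp}(G)\ge \omega(G_{\rm SR})$. Moreover, equality holds if and only if $G$ contains a gp-set that induces a complete subgraph of $G_{\rm SR}$.
   Context: All graphs are finite and simple. For a connected graph $G$, $d_G(u,v)$ is the distance between $u$ and $v$, and a geodesic is a shortest path. A set $S\subseteq V(G)$ is a general position set if no three pairwise distinct vertices of $S$ lie on a common geodesic of $G$; $\mathrm{gp}(G)$ is the maximum cardinality of a general position set, and a gp-set is a general position set of cardinality $\mathrm{gp}(G)$. A vertex $u$ is maximally distant from a vertex $v$ if every neighbor $w$ of $u$ satisfies $d_G(v,w)\le d_G(u,v)$; $u$ and $v$ are mutually maximally distant (MMD) if each is maximally distant from the other. The strong resolving graph $G_{\rm SR}$ has vertex set $V(G)$, two distinct vertices being adjacent in $G_{\rm SR}$ iff they are MMD in $G$. $\omega$ denotes the clique number. *)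

theory Defs
  imports Main
begin

definition simple_graph :: "'a set \<Rightarrow> ('a \<Rightarrow> 'a \<Rightarrow> bool) \<Rightarrow> bool" where
  "simple_graph V E \<longleftrightarrow> finite V \<and> (\<forall>u v. E u v \<longrightarrow> u \<in> V \<and> v \<in> V) \<and>
     (\<forall>u v. E u v \<longrightarrow> E v u) \<and> (\<forall>u. \<not> E u u)"

definition walk :: "'a set \<Rightarrow> ('a \<Rightarrow> 'a \<Rightarrow> bool) \<Rightarrow> 'a list \<Rightarrow> bool" where
  "walk V E xs \<longleftrightarrow> xs \<noteq> [] \<and> set xs \<subseteq> V \<and> (\<forall>i. Suc i < length xs \<longrightarrow> E (xs ! i) (xs ! Suc i))"

definition connected_graph :: "'a set \<Rightarrow> ('a \<Rightarrow> 'a \<Rightarrow> bool) \<Rightarrow> bool" where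
  "connected_graph V E \<longleftrightarrow> V \<noteq> {} \<and>
     (\<forall>u\<in>V. \<forall>v\<in>V. \<exists>xs. walk V E xs \<and> hd xs = u \<and> last xs = v)"

definition gdist :: "'a set \<Rightarrow> ('a \<Rightarrow> 'a \<Rightarrow> bool) \<Rightarrow> 'a \<Rightarrow> 'a \<Rightarrow> nat" where
  "gdist V E u v = (LEAST n. \<exists>xs. walk V E xs \<and> hd xs = u \<and> last xs = v \<and> length xs = Suc n)"

definition geodesic :: "'a set \<Rightarrow> ('a \<Rightarrow> 'a \<Rightarrow> bool) \<Rightarrow> 'a list \<Rightarrow> bool" where
  "geodesic V E xs \<longleftrightarrow> walk V E xs \<and> length xs = Suc (gdist V E (hd xs) (last xs))"

definition gp_position :: "'a set \<Rightarrow> ('a \<Rightarrow> 'a \<Rightarrow> bool) \<Rightarrow> 'a set \<Rightarrow> bool" where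
  "gp_position V E S \<longleftrightarrow> S \<subseteq> V \<and>
     (\<forall>u\<in>S. \<forall>v\<in>S. \<forall>w\<in>S. u \<noteq> v \<and> v \<noteq> w \<and> u \<noteq> w \<longrightarrow>
        \<not> (\<exists>P. geodesic V E P \<and> u \<in> set P \<and> v \<in> set P \<and> w \<in> set P))"

definition gp_number :: "'a set \<Rightarrow> ('a \<Rightarrow> 'a \<Rightarrow> bool) \<Rightarrow> nat" where
  "gp_number V E = Max (card ` {S. gp_position V E S})"

definition gp_set :: "'a set \<Rightarrow> ('a \<Rightarrow> 'a \<Rightarrow> bool) \<Rightarrow> 'a set \<Rightarrow> bool" where
  "gp_set V E S \<longleftrightarrow> gp_position V E S \<and> card S = gp_number V E"

definition max_distant :: "'a set \<Rightarrow> ('a \<Rightarrow> 'a \<Rightarrow> bool) \<Rightarrow> 'a \<Rightarrow> 'a \<Rightarrow> bool" where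
  "max_distant V E u v \<longleftrightarrow> (\<forall>w. E u w \<longrightarrow> gdist V E v w \<le> gdist V E u v)"

definition MMD :: "'a set \<Rightarrow> ('a \<Rightarrow> 'a \<Rightarrow> bool) \<Rightarrow> 'a \<Rightarrow> 'a \<Rightarrow> bool" where
  "MMD V E u v \<longleftrightarrow> max_distant V E u v \<and> max_distant V E v u"

definition SR_edge :: "'a set \<Rightarrow> ('a \<Rightarrow> 'a \<Rightarrow> bool) \<Rightarrow> 'a \<Rightarrow> 'a \<Rightarrow> bool" where
  "SR_edge V E u v \<longleftrightarrow> u \<in> V \<and> v \<in> V \<and> u \<noteq> v \<and> MMD V E u v"

definition is_clique :: "'a set \<Rightarrow> ('a \<Rightarrow> 'a \<Rightarrow> bool) \<Rightarrow> 'a set \<Rightarrow> bool" where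
  "is_clique V F K \<longleftrightarrow> K \<subseteq> V \<and> (\<forall>u\<in>K. \<forall>v\<in>K. u \<noteq> v \<longrightarrow> F u v)"

definition clique_number :: "'a set \<Rightarrow> ('a \<Rightarrow> 'a \<Rightarrow> bool) \<Rightarrow> nat" where
  "clique_number V F = Max (card ` {K. is_clique V F K})"

end

theory Submission
  imports Defs
begin

lemma walk_append:
  assumes "walk V E xs" "walk V E ys" "last xs = hd ys"
  shows "walk V E (xs @ tl ys)"
proof -
  have "xs @ tl ys \<noteq> []" using assms(1) by (simp add: walk_def)
  moreover have "set (xs @ tl ys) \<subseteq> V" using assms(1,2)
    by (auto simp: walk_def dest: list.set_sel(2))
  moreover have "E ((xs @ tl ys) ! i) ((xs @ tl ys) ! Suc i)" if "Suc i < length (xs @ tl ys)" for i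
  proof -
    consider "Suc i < length xs" | "Suc i = length xs" | "Suc i > length xs" by linarith
    then show ?thesis
    proof cases
      case 1 then show ?thesis using assms(1) by (simp add: walk_def nth_append)
    next
      case 2
      have "xs ! i = last xs" using 2 assms(1) by (metis diff_Suc_1 last_conv_nth walk_def)
      moreover have "ys ! 0 = hd ys" using assms(2) by (simp add: walk_def hd_conv_nth)
      moreover have "tl ys ! 0 = ys ! 1" using that 2 by (cases ys) auto
      moreover have "E (ys ! 0) (ys ! Suc 0)" using assms(2) that 2 by (cases ys) (auto simp: walk_def)
      ultimately show ?thesis using 2 assms(3) by (simp add: nth_append)
    next
      case 3
      define k where "k = i - length xs"
      have i: "i = length xs + k" using 3 k_def by simp
      have "E (ys ! Suc k) (ys ! Suc (Suc k))" using assms(2) that i by (cases ys) (auto simp: walk_def)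
      then show ?thesis using i that by (cases ys) (auto simp: nth_append)
    qed
  qed
  ultimately show ?thesis by (simp add: walk_def)
qed

lemma walk_rev:
  assumes "walk V E xs" "\<forall>u v. E u v \<longrightarrow> E v u"
  shows "walk V E (rev xs)"
proof -
  have "E (rev xs ! i) (rev xs ! Suc i)" if "Suc i < length xs" for i
  proof -
    have "E (xs ! (length xs - Suc (Suc i))) (xs ! Suc (length xs - Suc (Suc i)))"
      using assms(1) that by (simp add: walk_def)
    moreover have "Suc (length xs - Suc (Suc i)) = length xs - Suc i" using that by simp
    ultimately show ?thesis using that assms(2) by (simp add: rev_nth)
  qed
  then show ?thesis using assms(1) by (simp add: walk_def)
qed

lemma walk_seg:
  assumes "walk V E P" "i \<le> j" "j < length P"
  shows "walk V E (drop i (take (Suc j) P)) \<and> hd (drop i (take (Suc j) P)) = P ! i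
    \<and> last (drop i (take (Suc j) P)) = P ! j \<and> length (drop i (take (Suc j) P)) = Suc (j - i)"
proof -
  let ?Q = "drop i (take (Suc j) P)"
  have len: "length ?Q = Suc (j - i)" using assms by simp
  have nth: "?Q ! k = P ! (i + k)" if "k < length ?Q" for k using that assms by simp
  have "set ?Q \<subseteq> set P" by (meson in_set_dropD in_set_takeD subsetI)
  moreover have "E (?Q ! k) (?Q ! Suc k)" if "Suc k < length ?Q" for k
    using that nth[of k] nth[of "Suc k"] assms len by (simp add: walk_def)
  ultimately have "walk V E ?Q" using assms len by (auto simp: walk_def)
  moreover have "hd ?Q = P ! i" using nth[of 0] len by (simp add: hd_conv_nth)
  moreover have "last ?Q = P ! j" using nth[of "j - i"] len assms
    by (metis Zero_not_Suc diff_Suc_1 last_conv_nth le_add_diff_inverse lessI list.size(3))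
  ultimately show ?thesis using len by simp
qed

lemma gdist_le:
  assumes "walk V E xs" "hd xs = u" "last xs = v"
  shows "gdist V E u v \<le> length xs - 1"
proof -
  have "length xs = Suc (length xs - 1)" using assms(1) by (cases xs) (auto simp: walk_def)
  then show ?thesis unfolding gdist_def using assms by (intro Least_le) blast
qed

lemma gdist_ex:
  assumes "connected_graph V E" "u \<in> V" "v \<in> V"
  shows "\<exists>xs. walk V E xs \<and> hd xs = u \<and> last xs = v \<and> length xs = Suc (gdist V E u v)"
proof -
  obtain xs where xs: "walk V E xs" "hd xs = u" "last xs = v"
    using assms by (auto simp: connected_graph_def)
  have "length xs = Suc (length xs - 1)" using xs(1) by (cases xs) (auto simp: walk_def)
  then have "\<exists>n xs. walk V E xs \<and> hd xs = u \<and> last xs = v \<and> length xs = Suc n" using xs by blast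
  then show ?thesis unfolding gdist_def by (rule LeastI_ex)
qed

lemma gdist_sym:
  assumes "simple_graph V E" "connected_graph V E" "u \<in> V" "v \<in> V"
  shows "gdist V E u v = gdist V E v u"
proof -
  have *: "gdist V E a b \<le> gdist V E b a" if "a \<in> V" "b \<in> V" for a b
  proof -
    obtain xs where xs: "walk V E xs" "hd xs = b" "last xs = a" "length xs = Suc (gdist V E b a)"
      using gdist_ex[OF assms(2) \<open>b \<in> V\<close> \<open>a \<in> V\<close>] by blast
    have "walk V E (rev xs)" using walk_rev[OF xs(1)] assms(1) by (auto simp: simple_graph_def)
    moreover have "xs \<noteq> []" using xs(1) by (simp add: walk_def)
    ultimately show ?thesis using gdist_le[of V E "rev xs" a b] xs by (simp add: hd_rev last_rev)
  qed
  show ?thesis using *[of u v] *[of v u] assms by simp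
qed

lemma gdist_tri:
  assumes "connected_graph V E" "u \<in> V" "v \<in> V" "w \<in> V"
  shows "gdist V E u w \<le> gdist V E u v + gdist V E v w"
proof -
  obtain xs where xs: "walk V E xs" "hd xs = u" "last xs = v" "length xs = Suc (gdist V E u v)"
    using gdist_ex[OF assms(1,2,3)] by blast
  obtain ys where ys: "walk V E ys" "hd ys = v" "last ys = w" "length ys = Suc (gdist V E v w)"
    using gdist_ex[OF assms(1,3,4)] by blast
  have W: "walk V E (xs @ tl ys)" using walk_append xs ys by fastforce
  have "hd (xs @ tl ys) = u" using xs by (cases xs) auto
  moreover have "last (xs @ tl ys) = w"
    using xs ys by (cases ys) (auto simp: walk_def)
  ultimately have "gdist V E u w \<le> length (xs @ tl ys) - 1" using gdist_le[OF W] by blast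
  then show ?thesis using xs ys by simp
qed

lemma geodesic_seg:
  assumes "connected_graph V E" "geodesic V E P" "i \<le> j" "j < length P"
  shows "gdist V E (P ! i) (P ! j) = j - i"
proof -
  have W: "walk V E P" using assms(2) by (simp add: geodesic_def)
  have ne: "P \<noteq> []" using W by (simp add: walk_def)
  have inV: "set P \<subseteq> V" using W by (simp add: walk_def)
  have a: "gdist V E (P ! i) (P ! j) \<le> j - i"
    using walk_seg[OF W assms(3,4)] gdist_le by fastforce
  have b: "gdist V E (P ! 0) (P ! i) \<le> i"
    using walk_seg[OF W _ , of 0 i] assms gdist_le by fastforce
  have c: "gdist V E (P ! j) (P ! (length P - 1)) \<le> length P - 1 - j"
    using walk_seg[OF W, of j "length P - 1"] assms gdist_le by fastforce
  have hd: "hd P = P ! 0" using ne by (simp add: hd_conv_nth)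
  have lst: "last P = P ! (length P - 1)" using ne by (simp add: last_conv_nth)
  have g: "length P = Suc (gdist V E (P ! 0) (P ! (length P - 1)))"
    using assms(2) hd lst by (simp add: geodesic_def)
  have inI: "P ! i \<in> V" "P ! j \<in> V" "P ! 0 \<in> V" "P ! (length P - 1) \<in> V"
    using inV assms ne by auto
  have "gdist V E (P ! 0) (P ! (length P - 1)) \<le>
      gdist V E (P ! 0) (P ! i) + gdist V E (P ! i) (P ! (length P - 1))"
    using gdist_tri[OF assms(1)] inI by blast
  moreover have "gdist V E (P ! i) (P ! (length P - 1)) \<le>
      gdist V E (P ! i) (P ! j) + gdist V E (P ! j) (P ! (length P - 1))"
    using gdist_tri[OF assms(1)] inI by blast
  ultimately show ?thesis using a b c g assms by linarith
qed

lemma core: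
  assumes "simple_graph V E" "connected_graph V E" "geodesic V E P" "i < j" "j < k" "k < length P"
  shows "\<not> SR_edge V E (P ! i) (P ! j)"
proof
  assume "SR_edge V E (P ! i) (P ! j)"
  then have md: "max_distant V E (P ! j) (P ! i)" by (simp add: SR_edge_def MMD_def)
  have W: "walk V E P" using assms(3) by (simp add: geodesic_def)
  have "E (P ! j) (P ! Suc j)" using W assms by (simp add: walk_def)
  then have le: "gdist V E (P ! i) (P ! Suc j) \<le> gdist V E (P ! j) (P ! i)"
    using md by (simp add: max_distant_def)
  have inV: "P ! i \<in> V" "P ! j \<in> V" using W assms by (auto simp: walk_def)
  have "gdist V E (P ! j) (P ! i) = j - i"
    using gdist_sym[OF assms(1,2) inV(2,1)] geodesic_seg[OF assms(2,3), of i j] assms by simp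
  moreover have "gdist V E (P ! i) (P ! Suc j) = Suc j - i"
    using geodesic_seg[OF assms(2,3), of i "Suc j"] assms by simp
  ultimately show False using le assms by simp
qed

lemma clique_gp:
  assumes "simple_graph V E" "connected_graph V E" "is_clique V (SR_edge V E) K"
  shows "gp_position V E K"
proof -
  have "False" if H: "u \<in> K" "v \<in> K" "w \<in> K" "u \<noteq> v" "v \<noteq> w" "u \<noteq> w"
    "geodesic V E P" "u \<in> set P" "v \<in> set P" "w \<in> set P" for u v w P
  proof -
    have C: "\<And>i j k. i < j \<Longrightarrow> j < k \<Longrightarrow> k < length P \<Longrightarrow> \<not> SR_edge V E (P ! i) (P ! j)"
      using core[OF assms(1,2) H(7)] by blast
    have S: "\<And>x y. x \<in> K \<Longrightarrow> y \<in> K \<Longrightarrow> x \<noteq> y \<Longrightarrow> SR_edge V E x y"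
      using assms(3) by (auto simp: is_clique_def)
    obtain a where a: "a < length P" "P ! a = u" using H(8) by (metis in_set_conv_nth)
    obtain b where b: "b < length P" "P ! b = v" using H(9) by (metis in_set_conv_nth)
    obtain c where c: "c < length P" "P ! c = w" using H(10) by (metis in_set_conv_nth)
    have "a \<noteq> b" "b \<noteq> c" "a \<noteq> c" using a b c H by auto
    then consider "a < b \<and> b < c" | "a < c \<and> c < b" | "b < a \<and> a < c" | "b < c \<and> c < a"
      | "c < a \<and> a < b" | "c < b \<and> b < a" by linarith
    then show False
    proof cases
      case 1 then show ?thesis using C[of a b c] S[of u v] a b c H by auto
    next
      case 2 then show ?thesis using C[of a c b] S[of u w] a b c H by auto
    next
      case 3 then show ?thesis using C[of b a c] S[of v u] a b c H by auto
    next
      case 4 then show ?thesis using C[of b c a] S[of v w] a b c H by auto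
    next
      case 5 then show ?thesis using C[of c a b] S[of w u] a b c H by auto
    next
      case 6 then show ?thesis using C[of c b a] S[of w v] a b c H by auto
    qed
  qed
  then show ?thesis using assms(3) unfolding gp_position_def is_clique_def by blast
qed

lemma fin_cards:
  assumes "finite V" "\<And>S. P S \<Longrightarrow> S \<subseteq> V"
  shows "finite (card ` {S. P S})"
proof -
  have "card ` {S. P S} \<subseteq> {..card V}"
    using assms by (auto intro: card_mono)
  then show ?thesis using finite_subset by blast
qed

theorem theorem3p1:
  fixes V :: "'a set" and E :: "'a \<Rightarrow> 'a \<Rightarrow> bool"
  assumes "simple_graph V E" and "connected_graph V E"
  shows "gp_number V E \<ge> clique_number V (SR_edge V E) \<and>
         (gp_number V E = clique_number V (SR_edge V E) \<longleftrightarrow>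
            (\<exists>S. gp_set V E S \<and> is_clique V (SR_edge V E) S))"
proof -
  have fV: "finite V" using assms(1) by (simp add: simple_graph_def)
  have f1: "finite (card ` {S. gp_position V E S})"
    using fin_cards[OF fV, of "gp_position V E"] by (simp add: gp_position_def)
  have f2: "finite (card ` {K. is_clique V (SR_edge V E) K})"
    using fin_cards[OF fV, of "is_clique V (SR_edge V E)"] by (simp add: is_clique_def)
  have ne2: "card ` {K. is_clique V (SR_edge V E) K} \<noteq> {}"
    using is_clique_def by fastforce
  obtain K where K: "is_clique V (SR_edge V E) K" "card K = clique_number V (SR_edge V E)"
    using Max_in[OF f2 ne2] unfolding clique_number_def by auto
  have Kgp: "gp_position V E K" using clique_gp[OF assms K(1)] .
  have ge: "card K \<le> gp_number V E"
    unfolding gp_number_def using Kgp f1 by (intro Max_ge) auto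
  have "(\<exists>S. gp_set V E S \<and> is_clique V (SR_edge V E) S) \<Longrightarrow> gp_number V E \<le> clique_number V (SR_edge V E)"
  proof -
    assume "\<exists>S. gp_set V E S \<and> is_clique V (SR_edge V E) S"
    then obtain S where S: "gp_set V E S" "is_clique V (SR_edge V E) S" by blast
    have "card S \<le> clique_number V (SR_edge V E)"
      unfolding clique_number_def using S(2) f2 by (intro Max_ge) auto
    then show ?thesis using S(1) by (simp add: gp_set_def)
  qed
  moreover have "gp_number V E = clique_number V (SR_edge V E) \<Longrightarrow>
      (\<exists>S. gp_set V E S \<and> is_clique V (SR_edge V E) S)"
    using K Kgp by (auto simp: gp_set_def)
  ultimately show ?thesis using ge K(2) by auto
qed

end
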